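(* Let $h>0$ and $\mathbb{T}:=\{0,h,2h,\ldots\}$. Let $p_0,p_1\in\mathbb{C}\setminus\{-\tfrac{1}{h}\}$ with $p_0\ne p_1$ and $0<|1+hp_0||1+hp_1|\ne 1$, and define $p:\mathbb{T}\to\mathbb{C}$ by $p(t)=p_0$ if $\tfrac{t}{h}$ is even and $p(t)=p_1$ if $\tfrac{t}{h}$ is odd. Then the equation $\Delta_h x(t)-p(t)x(t)=0$, $t\in\mathbb{T}$, where $\Delta_hx(t):=\frac{x(t+h)-x(t)}{h}$, has Ulam stability on $\mathbb{T}$ with Ulam stability constant $$K_0:=h\max\left\{\frac{1+|1+hp_0|}{\big|1-|1+hp_0||1+hp_1|\big|},\ \frac{1+|1+hp_1|}{\big|1-|1+hp_0||1+hp_1|\big|}\right\}.$$ Moreover, if $|1+hp_0||1+hp_1|>1$, then $K_0$ is the minimum Ulam stability constant for this equation.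
   Context: A constant $K>0$ is an Ulam stability constant for the equation on $\mathbb{T}$ if for every $\varepsilon>0$ and every $\phi:\mathbb{T}\to\mathbb{C}$ with $|\Delta_h\phi(t)-p(t)\phi(t)|\le\varepsilon$ for all $t\in\mathbb{T}$, there exists a solution $x:\mathbb{T}\to\mathbb{C}$ of the equation with $|\phi(t)-x(t)|\le K\varepsilon$ for all $t\in\mathbb{T}$; the equation has Ulam stability if such $K$ exists. "Minimum" means no positive number smaller than $K_0$ is an Ulam stability constant. *)

theory Defs
  imports Complex_Main
begin

definition hZ :: "real \<Rightarrow> real set" where
  "hZ h = {real n * h | n. True}"

definition hdiff :: "real \<Rightarrow> (real \<Rightarrow> complex) \<Rightarrow> real \<Rightarrow> complex" where
  "hdiff h x t = (x (t + h) - x t) / complex_of_real h"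

definition pcoef :: "real \<Rightarrow> complex \<Rightarrow> complex \<Rightarrow> real \<Rightarrow> complex" where
  "pcoef h p0 p1 t = (if (\<exists>k::nat. t / h = real (2 * k)) then p0 else p1)"

definition ulam_constant :: "real \<Rightarrow> (real \<Rightarrow> complex) \<Rightarrow> real \<Rightarrow> bool" where
  "ulam_constant h p K \<longleftrightarrow> K > 0 \<and>
     (\<forall>\<epsilon>>0. \<forall>\<phi>::real \<Rightarrow> complex.
        (\<forall>t\<in>hZ h. cmod (hdiff h \<phi> t - p t * \<phi> t) \<le> \<epsilon>) \<longrightarrow>
        (\<exists>x::real \<Rightarrow> complex. (\<forall>t\<in>hZ h. hdiff h x t - p t * x t = 0) \<and>
                              (\<forall>t\<in>hZ h. cmod (\<phi> t - x t) \<le> K * \<epsilon>)))"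

definition ulam_stable :: "real \<Rightarrow> (real \<Rightarrow> complex) \<Rightarrow> bool" where
  "ulam_stable h p \<longleftrightarrow> (\<exists>K. ulam_constant h p K)"

definition min_ulam_constant :: "real \<Rightarrow> (real \<Rightarrow> complex) \<Rightarrow> real \<Rightarrow> bool" where
  "min_ulam_constant h p K0 \<longleftrightarrow> ulam_constant h p K0 \<and>
     (\<forall>K. 0 < K \<and> K < K0 \<longrightarrow> \<not> ulam_constant h p K)"

end

theory Submission imports Defs begin

definition cc :: "complex \<Rightarrow> complex \<Rightarrow> nat \<Rightarrow> complex" where
  "cc a b n = (if even n then a else b)"

lemma hZ_mem: "t \<in> hZ h \<longleftrightarrow> (\<exists>n. t = real n * h)"
  by (auto simp: hZ_def)

lemma pcoef_nh:
  assumes "h > 0"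
  shows "pcoef h p0 p1 (real n * h) = (if even n then p0 else p1)"
proof -
  have e: "real n * h / h = real n" using assms by simp
  have "(\<exists>k::nat. real n = real (2*k)) \<longleftrightarrow> even n"
    by (metis evenE dvd_triv_left of_nat_eq_iff)
  thus ?thesis by (simp add: pcoef_def e)
qed

lemma key_eq:
  assumes "h > 0"
  shows "hdiff h x (real n * h) - pcoef h p0 p1 (real n * h) * x (real n * h)
     = (x (real (Suc n) * h) - cc (1 + complex_of_real h * p0) (1 + complex_of_real h * p1) n * x (real n * h)) / complex_of_real h"
proof -
  have hs: "real (Suc n) * h = real n * h + h" by (simp add: distrib_right)
  show ?thesis using assms unfolding pcoef_nh[OF assms] hdiff_def cc_def hs
    by (simp add: field_simps)
qed

lemma disc_core:
  fixes y E :: "nat \<Rightarrow> complex" and a b :: complex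
  assumes E: "\<And>m. E (Suc m) = a*b*E m + (b * (y (Suc (2*m)) - cc a b (2*m) * y (2*m))
        + (y (Suc (2*m+1)) - cc a b (2*m+1) * y (2*m+1)))"
  defines "z \<equiv> \<lambda>n. if even n then y n - E (n div 2)
      else y n - (a * E (n div 2) + (y n - cc a b (n - 1) * y (n - 1)))"
  shows "z (Suc n) = cc a b n * z n"
proof (cases "even n")
  case True then obtain m where n: "n = 2*m" by blast
  show ?thesis by (simp add: z_def n cc_def algebra_simps)
next
  case False then obtain m where n: "n = 2*m+1" by (metis oddE)
  have "z (Suc n) = y (2*m+2) - E (Suc m)" by (simp add: z_def n)
  also have "\<dots> = b * (y (2*m+1) - (a*E m + (y (2*m+1) - a * y (2*m))))"
    by (simp add: E cc_def algebra_simps)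
  finally show ?thesis by (simp add: z_def n cc_def)
qed

lemma disc_exist:
  fixes y :: "nat \<Rightarrow> complex" and a b :: complex
  assumes ab: "0 < cmod a * cmod b" "cmod a * cmod b \<noteq> 1" and d: "\<delta> \<ge> 0"
    and r: "\<And>n. cmod (y (Suc n) - cc a b n * y n) \<le> \<delta>"
  shows "\<exists>z. (\<forall>n. z (Suc n) = cc a b n * z n) \<and>
     (\<forall>n. cmod (y n - z n) \<le> \<delta> * max ((1 + cmod a) / \<bar>1 - cmod a * cmod b\<bar>) ((1 + cmod b) / \<bar>1 - cmod a * cmod b\<bar>))"
proof -
  define r where "r = (\<lambda>n. y (Suc n) - cc a b n * y n)"
  define g where "g = (\<lambda>m. b * r (2*m) + r (2*m+1))"
  define A where "A = cmod a"
  define Bb where "Bb = cmod b"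
  have A0: "A > 0" and B0: "Bb > 0" using ab by (auto simp: A_def Bb_def zero_less_mult_iff)
  have rb: "cmod (r n) \<le> \<delta>" for n using r by (simp add: r_def)
  have gb: "cmod (g m) \<le> (1 + Bb) * \<delta>" for m
  proof -
    have "cmod (g m) \<le> cmod b * cmod (r (2*m)) + cmod (r (2*m+1))"
      unfolding g_def by (metis norm_mult norm_triangle_ineq)
    also have "\<dots> \<le> cmod b * \<delta> + \<delta>"
      by (intro add_mono mult_left_mono rb) auto
    finally show ?thesis by (simp add: algebra_simps Bb_def)
  qed
  define D where "D = \<bar>1 - A * Bb\<bar>"
  have Dpos: "D > 0" using ab by (simp add: D_def A_def Bb_def)
  obtain E where E: "\<And>m. E (Suc m) = a*b*E m + g m"
     and EB: "\<And>m. cmod (E m) \<le> \<delta>*(1+Bb)/D"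
     and odd: "\<And>m. cmod (a * E m + r (2*m)) \<le> \<delta>*(1+A)/D"
  proof (cases "A * Bb < 1")
    case True
    define E :: "nat \<Rightarrow> complex" where "E = rec_nat 0 (\<lambda>m e. a*b*e + g m)"
    have E0: "E 0 = 0" and ES: "\<And>m. E (Suc m) = a*b*E m + g m" by (simp_all add: E_def)
    have DD: "D = 1 - A * Bb" using True by (simp add: D_def)
    define B where "B = \<delta>*(1+Bb)/D"
    have BD: "B * (1 - A*Bb) = \<delta>*(1+Bb)" using Dpos by (simp add: B_def DD)
    have B0': "B \<ge> 0" using Dpos d B0 by (simp add: B_def)
    have EB: "cmod (E m) \<le> B" for m
    proof (induction m)
      case 0 then show ?case using B0' by (simp add: E0)
    next
      case (Suc m)
      have "cmod (E (Suc m)) \<le> A * Bb * cmod (E m) + cmod (g m)"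
        unfolding ES A_def Bb_def by (metis norm_mult norm_triangle_ineq mult.assoc)
      also have "\<dots> \<le> A * Bb * B + (1 + Bb) * \<delta>"
        by (intro add_mono mult_left_mono Suc gb) (use A0 B0 in auto)
      also have "\<dots> = B" using BD by (simp add: algebra_simps)
      finally show ?case .
    qed
    have "cmod (a * E m + r (2*m)) \<le> \<delta>*(1+A)/D" for m
    proof -
      have "cmod (a * E m + r (2*m)) \<le> A * cmod (E m) + cmod (r (2*m))"
        unfolding A_def by (metis norm_mult norm_triangle_ineq)
      also have "\<dots> \<le> A * B + \<delta>"
        by (intro add_mono mult_left_mono EB rb) (use A0 in auto)
      also have "A * B + \<delta> = \<delta>*(1+A)/D"
        using Dpos unfolding B_def DD by (simp add: field_simps)
      finally show ?thesis .
    qed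
    then show ?thesis using that ES EB unfolding B_def by blast
  next
    case False
    then have gt: "A * Bb > 1" using ab by (simp add: A_def Bb_def)
    have DD: "D = A * Bb - 1" using gt by (simp add: D_def)
    define q where "q = 1 / (a*b)"
    have nq: "cmod q = 1 / (A*Bb)" by (simp add: q_def A_def Bb_def norm_divide norm_mult)
    have nq1: "cmod q < 1" using gt by (simp add: nq)
    define G where "G = (1 + Bb) * \<delta>"
    have geo: "(\<lambda>j. cmod q ^ Suc j * G) sums (cmod q * G * (1 / (1 - cmod q)))"
    proof -
      have "(\<lambda>j. cmod q ^ j) sums (1 / (1 - cmod q))" by (rule geometric_sums) (use nq1 in simp)
      from sums_mult[OF this, of "cmod q * G"] show ?thesis by (simp add: algebra_simps)
    qed
    define f where "f = (\<lambda>m j. q ^ Suc j * g (j + m))"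
    have fb: "norm (f m j) \<le> cmod q ^ Suc j * G" for m j
      unfolding f_def G_def norm_mult norm_power
      by (intro mult_left_mono gb) auto
    have sn: "summable (\<lambda>j. norm (f m j))" for m
      by (rule summable_comparison_test'[OF sums_summable[OF geo], of 0]) (use fb in auto)
    have sf: "summable (f m)" for m by (rule summable_norm_cancel[OF sn])
    define E where "E = (\<lambda>m. - suminf (f m))"
    have val: "cmod q * G * (1 / (1 - cmod q)) = \<delta>*(1+Bb)/D"
      using gt A0 B0 unfolding nq DD G_def by (simp add: field_simps)
    have EB: "cmod (E m) \<le> \<delta>*(1+Bb)/D" for m
    proof -
      have "cmod (E m) \<le> (\<Sum>j. norm (f m j))" unfolding E_def norm_minus_cancel
        by (rule summable_norm[OF sn])
      also have "\<dots> \<le> (\<Sum>j. cmod q ^ Suc j * G)"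
        by (rule suminf_le[OF fb sn sums_summable[OF geo]])
      also have "\<dots> = \<delta>*(1+Bb)/D" using sums_unique[OF geo] val by simp
      finally show ?thesis .
    qed
    have ES: "E (Suc m) = a*b*E m + g m" for m
    proof -
      have "a \<noteq> 0" "b \<noteq> 0" using A0 B0 by (auto simp: A_def Bb_def)
      then have abq: "a * b * q = 1" by (simp add: q_def)
      have "a*b*E m = - (\<Sum>j. a*b*f m j)" unfolding E_def
        by (simp add: suminf_mult[OF sf])
      also have "(\<lambda>j. a*b*f m j) = (\<lambda>j. q^j * g (j+m))"
        by (rule ext) (simp add: f_def abq mult.assoc[symmetric])
      finally have 1: "a*b*E m = - (\<Sum>j. q^j * g (j+m))" .
      have sf2: "summable (\<lambda>j. q^j * g (j+m))"
        using summable_mult[OF sf[of m], of "a*b"] unfolding f_def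
        by (simp add: abq mult.assoc[symmetric])
      have "(\<Sum>j. q^(Suc j) * g (Suc j+m)) = (\<Sum>j. q^j * g (j+m)) - g m"
        using suminf_split_head[OF sf2] by simp
      moreover have "E (Suc m) = - (\<Sum>j. q^(Suc j) * g (Suc j+m))"
        unfolding E_def f_def by simp
      ultimately show ?thesis using 1 by simp
    qed
    have "cmod (a * E m + r (2*m)) \<le> \<delta>*(1+A)/D" for m
    proof -
      have "b * (a * E m + r (2*m)) = E (Suc m) - r (2*m+1)"
        unfolding ES g_def by (simp add: algebra_simps)
      hence "Bb * cmod (a * E m + r (2*m)) = cmod (E (Suc m) - r (2*m+1))"
        unfolding Bb_def by (metis norm_mult)
      also have "\<dots> \<le> cmod (E (Suc m)) + cmod (r (2*m+1))" by (rule norm_triangle_ineq4)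
      also have "\<dots> \<le> \<delta>*(1+Bb)/D + \<delta>" by (intro add_mono EB rb)
      also have "\<dots> = Bb * (\<delta>*(1+A)/D)"
        using Dpos unfolding DD by (simp add: field_simps)
      finally show ?thesis using B0 by (metis mult_le_cancel_left_pos times_divide_eq_right)
    qed
    then show ?thesis using that ES EB by blast
  qed
  define z where "z = (\<lambda>n. if even n then y n - E (n div 2)
      else y n - (a * E (n div 2) + (y n - cc a b (n - 1) * y (n - 1))))"
  have E': "\<And>m. E (Suc m) = a*b*E m + (b * (y (Suc (2*m)) - cc a b (2*m) * y (2*m))
        + (y (Suc (2*m+1)) - cc a b (2*m+1) * y (2*m+1)))"
    using E by (simp add: g_def r_def)
  have zs: "\<forall>n. z (Suc n) = cc a b n * z n"
    using disc_core[of E a b y, OF E'] unfolding z_def by blast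
  define M where "M = \<delta> * max ((1 + A) / D) ((1 + Bb) / D)"
  have "cmod (y n - z n) \<le> M" for n
  proof (cases "even n")
    case True
    then have "cmod (y n - z n) = cmod (E (n div 2))" by (simp add: z_def)
    also have "\<dots> \<le> \<delta> * ((1 + Bb) / D)" using EB by simp
    also have "\<dots> \<le> M" unfolding M_def by (intro mult_left_mono d) auto
    finally show ?thesis .
  next
    case False
    then obtain m where n: "n = 2*m+1" by (metis oddE)
    have "cmod (y n - z n) = cmod (a * E m + r (2*m))" by (simp add: z_def n r_def algebra_simps)
    also have "\<dots> \<le> \<delta> * ((1 + A) / D)" using odd by simp
    also have "\<dots> \<le> M" unfolding M_def by (intro mult_left_mono d) auto
    finally show ?thesis .
  qed
  then show ?thesis using zs unfolding M_def D_def A_def Bb_def by blast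
qed

lemma nh_floor: assumes "h > 0" shows "nat \<lfloor>real n * h / h\<rfloor> = n"
  using assms by simp

lemma nh_Suc: "real n * h + h = real (Suc n) * h"
  by (simp add: distrib_right)

theorem theorem2p3:
  fixes h :: real and p0 p1 :: complex
  assumes "h > 0"
    and "p0 \<noteq> - 1 / complex_of_real h" and "p1 \<noteq> - 1 / complex_of_real h"
    and "p0 \<noteq> p1"
    and "0 < cmod (1 + h * p0) * cmod (1 + h * p1)"
    and "cmod (1 + h * p0) * cmod (1 + h * p1) \<noteq> 1"
  defines "K0 \<equiv> h * max ((1 + cmod (1 + h * p0)) / \<bar>1 - cmod (1 + h * p0) * cmod (1 + h * p1)\<bar>)
                         ((1 + cmod (1 + h * p1)) / \<bar>1 - cmod (1 + h * p0) * cmod (1 + h * p1)\<bar>)"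
  shows "ulam_stable h (pcoef h p0 p1) \<and> ulam_constant h (pcoef h p0 p1) K0 \<and>
         (cmod (1 + h * p0) * cmod (1 + h * p1) > 1 \<longrightarrow> min_ulam_constant h (pcoef h p0 p1) K0)"
proof -
  note hp = assms(1)
  define a where "a = 1 + complex_of_real h * p0"
  define b where "b = 1 + complex_of_real h * p1"
  define A where "A = cmod a"
  define Bb where "Bb = cmod b"
  define D where "D = \<bar>1 - A * Bb\<bar>"
  define p where "p = pcoef h p0 p1"
  have ab: "0 < A * Bb" "A * Bb \<noteq> 1" using assms(5,6) by (simp_all add: A_def Bb_def a_def b_def)
  have A0: "A > 0" and B0: "Bb > 0" using ab by (auto simp: A_def Bb_def zero_less_mult_iff)
  have Dpos: "D > 0" using ab by (simp add: D_def)
  have K0: "K0 = h * max ((1 + A) / D) ((1 + Bb) / D)"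
    by (simp add: K0_def A_def Bb_def D_def a_def b_def)
  have K0pos: "K0 > 0"
  proof -
    have "0 < (1 + A) / D" using A0 Dpos by simp
    also have "\<dots> \<le> max ((1 + A) / D) ((1 + Bb) / D)" by simp
    finally show ?thesis unfolding K0 using hp by simp
  qed
  have KE: "hdiff h x (real n * h) - p (real n * h) * x (real n * h)
     = (x (real (Suc n) * h) - cc a b n * x (real n * h)) / complex_of_real h" for x n
    unfolding p_def a_def b_def by (rule key_eq[OF hp])
  have ch: "cmod (complex_of_real h) = h" using hp by simp
  have UC: "ulam_constant h p K0"
    unfolding ulam_constant_def
  proof (intro conjI allI impI K0pos)
    fix \<epsilon> :: real and \<phi> :: "real \<Rightarrow> complex"
    assume ep: "\<epsilon> > 0" and hyp: "\<forall>t\<in>hZ h. cmod (hdiff h \<phi> t - p t * \<phi> t) \<le> \<epsilon>"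
    define y where "y = (\<lambda>n. \<phi> (real n * h))"
    have yb: "cmod (y (Suc n) - cc a b n * y n) \<le> h * \<epsilon>" for n
    proof -
      have "cmod (hdiff h \<phi> (real n * h) - p (real n * h) * \<phi> (real n * h)) \<le> \<epsilon>"
        using hyp hZ_mem by blast
      hence "cmod (y (Suc n) - cc a b n * y n) / h \<le> \<epsilon>"
        unfolding KE norm_divide ch y_def .
      thus ?thesis using hp by (simp add: divide_le_eq mult.commute)
    qed
    obtain z where zs: "\<forall>n. z (Suc n) = cc a b n * z n"
      and zb: "\<forall>n. cmod (y n - z n) \<le> (h * \<epsilon>) * max ((1 + A) / D) ((1 + Bb) / D)"
      using disc_exist[OF ab[unfolded A_def Bb_def], of "h*\<epsilon>" y] yb hp ep
      unfolding D_def A_def Bb_def by auto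
    define x where "x = (\<lambda>t. z (nat \<lfloor>t / h\<rfloor>))"
    have xn: "x (real n * h) = z n" for n unfolding x_def using hp by simp
    show "\<exists>x. (\<forall>t\<in>hZ h. hdiff h x t - p t * x t = 0) \<and> (\<forall>t\<in>hZ h. cmod (\<phi> t - x t) \<le> K0 * \<epsilon>)"
    proof (intro exI conjI ballI)
      fix t assume "t \<in> hZ h"
      then obtain n where t: "t = real n * h" using hZ_mem by blast
      show "hdiff h x t - p t * x t = 0" unfolding t KE by (simp only: xn zs) simp
      have "cmod (\<phi> t - x t) = cmod (y n - z n)" by (simp add: t xn y_def)
      also have "\<dots> \<le> K0 * \<epsilon>" using zb unfolding K0 by (simp add: algebra_simps)
      finally show "cmod (\<phi> t - x t) \<le> K0 * \<epsilon>" .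
    qed
  qed
  have MIN: "min_ulam_constant h p K0" if gt: "A * Bb > 1"
    unfolding min_ulam_constant_def
  proof (intro conjI allI impI UC notI)
    fix K assume K: "0 < K \<and> K < K0" and UK: "ulam_constant h p K"
    have DD: "D = A * Bb - 1" using gt by (simp add: D_def)
    define U where "U = h * (1 + Bb) / D"
    define V where "V = h * (1 + A) / D"
    have ne: "A * Bb - 1 \<noteq> 0" using gt by simp
    have UV1: "V - A * U = - h" unfolding U_def V_def DD using ne
      by (simp add: divide_simps) (simp add: algebra_simps)
    have ne: "A * Bb - 1 \<noteq> 0" using gt by simp
    have UV2: "U - Bb * V = - h" unfolding U_def V_def DD using ne
      by (simp add: divide_simps) (simp add: algebra_simps)
    have Upos: "U \<ge> 0" "V \<ge> 0" using hp Dpos A0 B0 by (simp_all add: U_def V_def)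
    have K0UV: "K0 = max V U"
    proof (cases "A \<le> Bb")
      case True
      then have "(1 + A) / D \<le> (1 + Bb) / D" "V \<le> U" unfolding U_def V_def using Dpos hp
        by (auto intro!: divide_right_mono mult_left_mono)
      then show ?thesis unfolding K0 U_def V_def by (simp add: max_def)
    next
      case False
      then have "(1 + Bb) / D \<le> (1 + A) / D" "U \<le> V" unfolding U_def V_def using Dpos hp
        by (auto intro!: divide_right_mono mult_left_mono)
      then show ?thesis unfolding K0 U_def V_def by (simp add: max_def)
    qed
    define \<omega> where "\<omega> = a * b / complex_of_real (A * Bb)"
    define \<sigma> where "\<sigma> = a / complex_of_real A"
    have anz: "a \<noteq> 0" "b \<noteq> 0" using A0 B0 by (auto simp: A_def Bb_def)
    have n\<omega>: "cmod \<omega> = 1" using ab anz by (simp add: \<omega>_def norm_divide norm_mult A_def Bb_def)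
    have n\<sigma>: "cmod \<sigma> = 1" using A0 by (simp add: \<sigma>_def norm_divide A_def)
    have a\<sigma>: "a = \<sigma> * complex_of_real A" using A0 by (simp add: \<sigma>_def)
    have b\<sigma>: "b * \<sigma> = \<omega> * complex_of_real Bb" using A0 B0
      by (simp add: \<sigma>_def \<omega>_def field_simps)
    define y where "y = (\<lambda>n. if even n then complex_of_real U * \<omega> ^ (n div 2)
                              else complex_of_real V * \<sigma> * \<omega> ^ (n div 2))"
    have yb: "cmod (y (Suc n) - cc a b n * y n) = h" for n
    proof (cases "even n")
      case True
      then obtain m where n: "n = 2*m" by blast
      have "y (Suc n) - cc a b n * y n = \<sigma> * \<omega>^m * complex_of_real (V - A * U)"
        by (simp add: y_def n cc_def a\<sigma> algebra_simps)
      also have "\<dots> = - (\<sigma> * \<omega>^m * complex_of_real h)" unfolding UV1 by simp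
      finally show ?thesis using hp by (simp add: norm_mult norm_power n\<omega> n\<sigma>)
    next
      case False
      then obtain m where n: "n = 2*m+1" by (metis oddE)
      have "y (Suc n) - cc a b n * y n = complex_of_real U * \<omega>^Suc m - (b * \<sigma>) * complex_of_real V * \<omega>^m"
        by (simp add: y_def n cc_def algebra_simps)
      also have "\<dots> = \<omega>^Suc m * complex_of_real (U - Bb * V)"
        unfolding b\<sigma> by (simp add: algebra_simps)
      also have "\<dots> = - (\<omega>^Suc m * complex_of_real h)" unfolding UV2 by simp
      finally show ?thesis using hp by (simp add: norm_mult norm_power n\<omega> del: power_Suc)
    qed
    define \<phi> where "\<phi> = (\<lambda>t. y (nat \<lfloor>t / h\<rfloor>))"
    have \<phi>n: "\<phi> (real n * h) = y n" for n unfolding \<phi>_def using hp by simp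
    have hyp: "\<forall>t\<in>hZ h. cmod (hdiff h \<phi> t - p t * \<phi> t) \<le> 1"
    proof
      fix t assume "t \<in> hZ h"
      then obtain n where t: "t = real n * h" using hZ_mem by blast
      show "cmod (hdiff h \<phi> t - p t * \<phi> t) \<le> 1"
        unfolding t KE norm_divide ch by (simp only: \<phi>n yb) (use hp in simp)
    qed
    obtain x where xs: "\<forall>t\<in>hZ h. hdiff h x t - p t * x t = 0"
      and xb: "\<forall>t\<in>hZ h. cmod (\<phi> t - x t) \<le> K * 1"
    proof -
      have "\<forall>\<epsilon>>0. \<forall>\<phi>::real \<Rightarrow> complex.
        (\<forall>t\<in>hZ h. cmod (hdiff h \<phi> t - p t * \<phi> t) \<le> \<epsilon>) \<longrightarrow>
        (\<exists>x::real \<Rightarrow> complex. (\<forall>t\<in>hZ h. hdiff h x t - p t * x t = 0) \<and>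
                              (\<forall>t\<in>hZ h. cmod (\<phi> t - x t) \<le> K * \<epsilon>))"
        using UK unfolding ulam_constant_def by blast
      from this[rule_format, of 1 \<phi>, OF zero_less_one] hyp show ?thesis using that by blast
    qed
    define X where "X = (\<lambda>n. x (real n * h))"
    have Xs: "X (Suc n) = cc a b n * X n" for n
    proof -
      have "hdiff h x (real n * h) - p (real n * h) * x (real n * h) = 0"
        using xs hZ_mem by blast
      thus ?thesis unfolding KE X_def using hp by (simp del: of_nat_Suc)
    qed
    have Xb: "cmod (y n - X n) \<le> K" for n
    proof -
      have "real n * h \<in> hZ h" using hZ_mem by blast
      with xb have "cmod (\<phi> (real n * h) - x (real n * h)) \<le> K" by simp
      thus ?thesis unfolding X_def \<phi>n .
    qed
    have Xe: "X (2*m) = (a*b)^m * X 0" for m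
    proof (induction m)
      case 0 then show ?case by simp
    next
      case (Suc m)
      have "X (2 * Suc m) = b * (a * X (2*m))"
        using Xs[of "Suc (2*m)"] Xs[of "2*m"] by (simp add: cc_def)
      then show ?case using Suc by (simp add: algebra_simps)
    qed
    show False
    proof (cases "X 0 = 0")
      case True
      have X1: "X 1 = 0" using Xs[of 0] True by simp
      have "cmod (y 0) \<le> K" using Xb[of 0] True by simp
      hence "U \<le> K" using Upos by (simp add: y_def)
      moreover have "cmod (y 1) \<le> K" using Xb[of 1] X1 by simp
      hence "V \<le> K" using Upos by (simp add: y_def norm_mult n\<sigma>)
      ultimately show False using K K0UV by (simp add: max_def split: if_splits)
    next
      case False
      obtain m where m: "(U + K) / cmod (X 0) < (A * Bb) ^ m" using real_arch_pow[OF gt] by blast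
      have "cmod (X (2*m)) \<le> cmod (y (2*m)) + cmod (y (2*m) - X (2*m))"
        using norm_triangle_ineq4[of "y (2*m)" "y (2*m) - X (2*m)"] by simp
      also have "\<dots> \<le> cmod (y (2*m)) + K" using Xb[of "2*m"] by simp
      also have "cmod (y (2*m)) = U" using Upos by (simp add: y_def norm_mult norm_power n\<omega>)
      finally have "(A*Bb)^m * cmod (X 0) \<le> U + K"
        unfolding Xe by (simp add: norm_mult norm_power A_def Bb_def)
      hence "(A*Bb)^m \<le> (U + K) / cmod (X 0)" using False by (simp add: le_divide_eq)
      with m show False by simp
    qed
  qed
  show ?thesis
  proof (intro conjI impI)
    show "ulam_stable h (pcoef h p0 p1)" using UC unfolding ulam_stable_def p_def by blast
    show "ulam_constant h (pcoef h p0 p1) K0" using UC unfolding p_def .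
    assume "cmod (1 + h * p0) * cmod (1 + h * p1) > 1"
    then show "min_ulam_constant h (pcoef h p0 p1) K0"
      using MIN unfolding p_def A_def Bb_def a_def b_def by simp
  qed
qed

end
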